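(* For all loop-free hybrid programs $A,B$ and every set of variables $H$: if $FV(A)\cup FV(B)\subseteq H$ and $A\equiv_H B$, then $A^*\equiv_H B^*$.
   Context: Hybrid programs and their transition semantics $[\![\cdot]\!]$ are as in differential dynamic logic ($x:=\theta$, $x:=*$, $?\phi$, $x'=\theta\,\&\,Q$, $;$, $\cup$, $^*$); a program is loop-free if it contains no $^*$. $FV(\alpha)$ is the standard $d\mathcal{L}$ set of free variables of $\alpha$ (variables whose initial value may be read by $\alpha$). States $\sigma,\sigma'$ satisfy $\sigma\approx_H\sigma'$ iff they agree on every variable in $H$. For loop-free programs, $\alpha\equiv_H\beta$ iff for all states $\sigma_0,\sigma_1$ with $(\sigma_0,\sigma_1)\in[\![\alpha]\!]$ there exist $\sigma'_0,\sigma'_1$ with $(\sigma'_0,\sigma'_1)\in[\![\beta]\!]$, $\sigma_0\approx_H\sigma'_0$ and $\sigma_1\approx_H\sigma'_1$, and symmetrically with $\alpha,\beta$ exchanged. For loops (lock-step equivalence), $\alpha^*\equiv_H\beta^*$ iff for every $n\in\mathbb{N}$ and all states $\sigma_0,\dots,\sigma_n$ with $(\sigma_i,\sigma_{i+1})\in[\![\alpha]\!]$ for all $i<n$, there exist states $\sigma'_0,\dots,\sigma'_n$ with $(\sigma'_j,\sigma'_{j+1})\in[\![\beta]\!]$ for all $j<n$ and $\sigma_k\approx_H\sigma'_k$ for all $k\le n$; and symmetrically with $\alpha,\beta$ exchanged. *)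

theory Defs
  imports "HOL-Analysis.Analysis"
begin

type_synonym 'v state = "'v \<Rightarrow> real"

datatype 'v trm =
    Var 'v
  | Const real
  | Neg "'v trm"
  | Plus "'v trm" "'v trm"
  | Times "'v trm" "'v trm"

datatype 'v fml =
    Geq "'v trm" "'v trm"
  | Not "'v fml"
  | And "'v fml" "'v fml"
  | Exists 'v "'v fml"
  | Box "'v hp" "'v fml"
and 'v hp =
    Assign 'v "'v trm"
  | AssignAny 'v
  | Test "'v fml"
  | ODE "('v \<times> 'v trm) list" "'v fml"  (* x1'=\<theta>1,...,xn'=\<theta>n & Q *)
  | Seq "'v hp" "'v hp"
  | Choice "'v hp" "'v hp"
  | Loop "'v hp"

fun tsem :: "'v trm \<Rightarrow> 'v state \<Rightarrow> real" where
  "tsem (Var x) s = s x"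
| "tsem (Const c) s = c"
| "tsem (Neg t) s = - tsem t s"
| "tsem (Plus t u) s = tsem t s + tsem u s"
| "tsem (Times t u) s = tsem t s * tsem u s"

fun fsem :: "'v fml \<Rightarrow> 'v state set"
and psem :: "'v hp \<Rightarrow> ('v state \<times> 'v state) set" where
  "fsem (Geq t u) = {s. tsem t s \<ge> tsem u s}"
| "fsem (Not p) = - fsem p"
| "fsem (And p q) = fsem p \<inter> fsem q"
| "fsem (Exists x p) = {s. \<exists>r. s(x := r) \<in> fsem p}"
| "fsem (Box a p) = {s. \<forall>s'. (s, s') \<in> psem a \<longrightarrow> s' \<in> fsem p}"
| "psem (Assign x t) = {(s, s(x := tsem t s)) | s. True}"
| "psem (AssignAny x) = {(s, s(x := r)) | s r. True}"
| "psem (Test p) = {(s, s) | s. s \<in> fsem p}"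
| "psem (ODE eqs Q) = {(s, s') | s s'. \<exists>(r::real) (\<phi>::real \<Rightarrow> 'v state).
       0 \<le> r \<and> \<phi> 0 = s \<and> \<phi> r = s' \<and>
       (\<forall>t\<in>{0..r}. \<phi> t \<in> fsem Q) \<and>
       (\<forall>t\<in>{0..r}. \<forall>(x, \<theta>)\<in>set eqs.
           ((\<lambda>\<tau>. \<phi> \<tau> x) has_real_derivative tsem \<theta> (\<phi> t)) (at t within {0..r})) \<and>
       (\<forall>t\<in>{0..r}. \<forall>y. y \<notin> fst ` set eqs \<longrightarrow> \<phi> t y = s y)}"
| "psem (Seq a b) = psem a O psem b"
| "psem (Choice a b) = psem a \<union> psem b"
| "psem (Loop a) = (psem a)\<^sup>*"

fun tFV :: "'v trm \<Rightarrow> 'v set" where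
  "tFV (Var x) = {x}"
| "tFV (Const c) = {}"
| "tFV (Neg t) = tFV t"
| "tFV (Plus t u) = tFV t \<union> tFV u"
| "tFV (Times t u) = tFV t \<union> tFV u"

fun MBV :: "'v hp \<Rightarrow> 'v set" where
  "MBV (Assign x t) = {x}"
| "MBV (AssignAny x) = {x}"
| "MBV (Test p) = {}"
| "MBV (ODE eqs Q) = fst ` set eqs"
| "MBV (Seq a b) = MBV a \<union> MBV b"
| "MBV (Choice a b) = MBV a \<inter> MBV b"
| "MBV (Loop a) = {}"

fun fFV :: "'v fml \<Rightarrow> 'v set"
and FV :: "'v hp \<Rightarrow> 'v set" where
  "fFV (Geq t u) = tFV t \<union> tFV u"
| "fFV (Not p) = fFV p"
| "fFV (And p q) = fFV p \<union> fFV q"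
| "fFV (Exists x p) = fFV p - {x}"
| "fFV (Box a p) = FV a \<union> (fFV p - MBV a)"
| "FV (Assign x t) = tFV t"
| "FV (AssignAny x) = {}"
| "FV (Test p) = fFV p"
| "FV (ODE eqs Q) = fst ` set eqs \<union> (\<Union>(x, \<theta>)\<in>set eqs. tFV \<theta>) \<union> fFV Q"
| "FV (Seq a b) = FV a \<union> (FV b - MBV a)"
| "FV (Choice a b) = FV a \<union> FV b"
| "FV (Loop a) = FV a"

fun loop_free :: "'v hp \<Rightarrow> bool" where
  "loop_free (Assign x t) = True"
| "loop_free (AssignAny x) = True"
| "loop_free (Test p) = True"
| "loop_free (ODE eqs Q) = True"
| "loop_free (Seq a b) = (loop_free a \<and> loop_free b)"
| "loop_free (Choice a b) = (loop_free a \<and> loop_free b)"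
| "loop_free (Loop a) = False"

definition agree :: "'v set \<Rightarrow> 'v state \<Rightarrow> 'v state \<Rightarrow> bool" where
  "agree H s s' \<longleftrightarrow> (\<forall>x\<in>H. s x = s' x)"

definition sim_H :: "'v set \<Rightarrow> 'v hp \<Rightarrow> 'v hp \<Rightarrow> bool" where
  "sim_H H a b \<longleftrightarrow> (\<forall>s0 s1. (s0, s1) \<in> psem a \<longrightarrow>
      (\<exists>s0' s1'. (s0', s1') \<in> psem b \<and> agree H s0 s0' \<and> agree H s1 s1'))"

definition equiv_H :: "'v set \<Rightarrow> 'v hp \<Rightarrow> 'v hp \<Rightarrow> bool" where
  "equiv_H H a b \<longleftrightarrow> sim_H H a b \<and> sim_H H b a"

definition lockstep_sim_H :: "'v set \<Rightarrow> 'v hp \<Rightarrow> 'v hp \<Rightarrow> bool" where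
  "lockstep_sim_H H a b \<longleftrightarrow> (\<forall>(n::nat) (\<sigma>::nat \<Rightarrow> 'v state).
      (\<forall>i<n. (\<sigma> i, \<sigma> (Suc i)) \<in> psem a) \<longrightarrow>
      (\<exists>\<sigma>'::nat \<Rightarrow> 'v state. (\<forall>j<n. (\<sigma>' j, \<sigma>' (Suc j)) \<in> psem b) \<and>
                            (\<forall>k\<le>n. agree H (\<sigma> k) (\<sigma>' k))))"

text \<open>Lock-step equivalence of loops a* and b*.\<close>
definition loop_equiv_H :: "'v set \<Rightarrow> 'v hp \<Rightarrow> 'v hp \<Rightarrow> bool" where
  "loop_equiv_H H a b \<longleftrightarrow> lockstep_sim_H H a b \<and> lockstep_sim_H H b a"

end

theory Submission
  imports Defs
begin

lemma agree_sym: "agree V s t \<Longrightarrow> agree V t s" by (auto simp: agree_def)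
lemma agree_trans: "agree V s t \<Longrightarrow> agree V t u \<Longrightarrow> agree V s u" by (auto simp: agree_def)
lemma agree_mono: "agree V s t \<Longrightarrow> W \<subseteq> V \<Longrightarrow> agree W s t" by (auto simp: agree_def)

lemma tcoinc: "tFV \<theta> \<subseteq> V \<Longrightarrow> agree V s t \<Longrightarrow> tsem \<theta> s = tsem \<theta> t"
  by (induction \<theta>) (auto simp: agree_def)

lemma coinc:
  fixes p :: "'v fml" and a :: "'v hp"
  shows "\<forall>V s t. fFV p \<subseteq> V \<longrightarrow> agree V s t \<longrightarrow> (s \<in> fsem p \<longleftrightarrow> t \<in> fsem p)"
  "\<forall>V s t s'. FV a \<subseteq> V \<longrightarrow> agree V s t \<longrightarrow> (s, s') \<in> psem a \<longrightarrow>
     (\<exists>t'. (t, t') \<in> psem a \<and> agree (V \<union> MBV a) s' t')"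
proof (induction p and a rule: fml.induct hp.induct)
  case (Geq x1 x2)
  show ?case
  proof (intro allI impI)
    fix V s t assume a: "fFV (Geq x1 x2) \<subseteq> V" "agree V s t"
    then have "tsem x1 s = tsem x1 t" "tsem x2 s = tsem x2 t" using tcoinc by auto
    then show "s \<in> fsem (Geq x1 x2) \<longleftrightarrow> t \<in> fsem (Geq x1 x2)" by simp
  qed
next
  case (Not p)
  show ?case
  proof (intro allI impI)
    fix V s t assume a: "fFV (fml.Not p) \<subseteq> V" "agree V s t"
    have 1: "s \<in> fsem p \<longleftrightarrow> t \<in> fsem p" using Not.IH a(2) a(1)[simplified] by blast
    show "s \<in> fsem (fml.Not p) \<longleftrightarrow> t \<in> fsem (fml.Not p)" using 1 by simp
  qed
next
  case (And p1 p2)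
  show ?case
  proof (intro allI impI)
    fix V s t assume "fFV (And p1 p2) \<subseteq> V" "agree V s t"
    then have "fFV p1 \<subseteq> V" "fFV p2 \<subseteq> V" by auto
    then show "s \<in> fsem (And p1 p2) \<longleftrightarrow> t \<in> fsem (And p1 p2)"
    proof -
      have 1: "s \<in> fsem p1 \<longleftrightarrow> t \<in> fsem p1" using And.IH(1) \<open>fFV p1 \<subseteq> V\<close> \<open>agree V s t\<close> by blast
      have 2: "s \<in> fsem p2 \<longleftrightarrow> t \<in> fsem p2" using And.IH(2) \<open>fFV p2 \<subseteq> V\<close> \<open>agree V s t\<close> by blast
      show ?thesis using 1 2 by simp
    qed
  qed
next
  case (Exists x p)
  show ?case
  proof (intro allI impI)
    fix V s t assume "fFV (Exists x p) \<subseteq> V" "agree V s t"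
    then have h: "\<And>r. fFV p \<subseteq> V \<union> {x} \<and> agree (V \<union> {x}) (s(x:=r)) (t(x:=r))"
      by (auto simp: agree_def)
    have "\<And>r. s(x:=r) \<in> fsem p \<longleftrightarrow> t(x:=r) \<in> fsem p" using Exists.IH h by blast
    then show "s \<in> fsem (Exists x p) \<longleftrightarrow> t \<in> fsem (Exists x p)" by simp
  qed
next
  case (Box a p)
  show ?case
  proof (intro allI impI)
    fix V s t assume sub: "fFV (Box a p) \<subseteq> V" and ag: "agree V s t"
    have fa: "FV a \<subseteq> V" and fp: "fFV p \<subseteq> V \<union> MBV a" using sub by auto
    have dir: "u \<in> fsem (Box a p)" if wu: "agree V w u" "w \<in> fsem (Box a p)" for w u
    proof -
      { fix u' assume "(u, u') \<in> psem a"
        then obtain w' where "(w, w') \<in> psem a" "agree (V \<union> MBV a) u' w'"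
          using Box.IH(1) fa agree_sym[OF wu(1)] by blast
        then have "w' \<in> fsem p" using wu(2) by auto
        then have "u' \<in> fsem p" using Box.IH(2) fp \<open>agree (V \<union> MBV a) u' w'\<close> by blast }
      then show ?thesis by auto
    qed
    show "s \<in> fsem (Box a p) \<longleftrightarrow> t \<in> fsem (Box a p)"
      using dir ag agree_sym by blast
  qed
next
  case (Assign x \<theta>)
  show ?case
  proof (intro allI impI)
    fix V s t s' assume "FV (Assign x \<theta>) \<subseteq> V" "agree V s t" "(s, s') \<in> psem (Assign x \<theta>)"
    then have "s' = s(x := tsem \<theta> s)" "tsem \<theta> s = tsem \<theta> t" using tcoinc by auto
    then show "\<exists>t'. (t, t') \<in> psem (Assign x \<theta>) \<and> agree (V \<union> MBV (Assign x \<theta>)) s' t'"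
      using \<open>agree V s t\<close> by (intro exI[of _ "t(x := tsem \<theta> t)"]) (auto simp: agree_def)
  qed
next
  case (AssignAny x)
  show ?case
  proof (intro allI impI)
    fix V s t s' assume "FV (AssignAny x) \<subseteq> V" "agree V s t" "(s, s') \<in> psem (AssignAny x)"
    then obtain r where "s' = s(x := r)" by auto
    then show "\<exists>t'. (t, t') \<in> psem (AssignAny x) \<and> agree (V \<union> MBV (AssignAny x)) s' t'"
      using \<open>agree V s t\<close> by (intro exI[of _ "t(x := r)"]) (auto simp: agree_def)
  qed
next
  case (Test p)
  show ?case
  proof (intro allI impI)
    fix V s t s' assume "FV (Test p) \<subseteq> V" "agree V s t" "(s, s') \<in> psem (Test p)"
    then have "s' = s" "s \<in> fsem p" by auto
    moreover have "fFV p \<subseteq> V" using \<open>FV (Test p) \<subseteq> V\<close> by simp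
    ultimately have "t \<in> fsem p" using Test.IH \<open>agree V s t\<close> by blast
    then have "(t, t) \<in> psem (Test p)" by simp
    then show "\<exists>t'. (t, t') \<in> psem (Test p) \<and> agree (V \<union> MBV (Test p)) s' t'"
      using \<open>s' = s\<close> \<open>agree V s t\<close> by auto
  qed
next
  case (ODE eqs Q)
  show ?case
  proof (intro allI impI)
    fix V s t s' assume sub: "FV (ODE eqs Q) \<subseteq> V" and ag: "agree V s t"
      and tr: "(s, s') \<in> psem (ODE eqs Q)"
    let ?B = "fst ` set eqs"
    obtain r \<phi> where r: "0 \<le> r" "\<phi> 0 = s" "\<phi> r = s'"
      and q: "\<forall>\<tau>\<in>{0..r}. \<phi> \<tau> \<in> fsem Q"
      and d: "\<forall>\<tau>\<in>{0..r}. \<forall>(x, \<theta>)\<in>set eqs.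
           ((\<lambda>\<tau>'. \<phi> \<tau>' x) has_real_derivative tsem \<theta> (\<phi> \<tau>)) (at \<tau> within {0..r})"
      and u: "\<forall>\<tau>\<in>{0..r}. \<forall>y. y \<notin> ?B \<longrightarrow> \<phi> \<tau> y = s y"
      using tr by auto
    define \<psi> where "\<psi> = (\<lambda>\<tau> y. if y \<in> ?B then \<phi> \<tau> y else t y)"
    have subB: "?B \<subseteq> V" and subQ: "fFV Q \<subseteq> V"
      and subT: "\<And>x \<theta>. (x, \<theta>) \<in> set eqs \<Longrightarrow> tFV \<theta> \<subseteq> V" using sub by auto
    have agt: "agree (V \<union> ?B) (\<phi> \<tau>) (\<psi> \<tau>)" if "\<tau> \<in> {0..r}" for \<tau>
      using u that ag subB by (auto simp: agree_def \<psi>_def)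
    have p0: "\<psi> 0 = t"
    proof
      fix y show "\<psi> 0 y = t y"
        using r(2) ag subB by (auto simp: \<psi>_def agree_def)
    qed
    have q': "\<forall>\<tau>\<in>{0..r}. \<psi> \<tau> \<in> fsem Q"
    proof
      fix \<tau> assume "\<tau> \<in> {0..r}"
      then show "\<psi> \<tau> \<in> fsem Q" using ODE.IH q subQ agree_mono[OF agt[of \<tau>]] by blast
    qed
    have d': "\<forall>\<tau>\<in>{0..r}. \<forall>(x, \<theta>)\<in>set eqs.
           ((\<lambda>\<tau>'. \<psi> \<tau>' x) has_real_derivative tsem \<theta> (\<psi> \<tau>)) (at \<tau> within {0..r})"
    proof (intro ballI, clarify)
      fix \<tau> x \<theta> assume \<tau>: "\<tau> \<in> {0..r}" and xt: "(x, \<theta>) \<in> set eqs"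
      have xb: "x \<in> ?B" using xt by force
      have "(\<lambda>\<tau>'. \<psi> \<tau>' x) = (\<lambda>\<tau>'. \<phi> \<tau>' x)" using xb by (auto simp: \<psi>_def)
      moreover have "tsem \<theta> (\<psi> \<tau>) = tsem \<theta> (\<phi> \<tau>)"
        using tcoinc[OF subT[OF xt] agree_mono[OF agt[OF \<tau>]]] by simp
      ultimately show "((\<lambda>\<tau>'. \<psi> \<tau>' x) has_real_derivative tsem \<theta> (\<psi> \<tau>)) (at \<tau> within {0..r})"
        using d \<tau> xt by auto
    qed
    have u': "\<forall>\<tau>\<in>{0..r}. \<forall>y. y \<notin> ?B \<longrightarrow> \<psi> \<tau> y = t y" by (auto simp: \<psi>_def)
    have "(t, \<psi> r) \<in> psem (ODE eqs Q)"
      using r(1) p0 q' d' u' by (auto intro!: exI[of _ r] exI[of _ \<psi>])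
    moreover have "agree (V \<union> MBV (ODE eqs Q)) s' (\<psi> r)"
      using agt[of r] r by auto
    ultimately show "\<exists>t'. (t, t') \<in> psem (ODE eqs Q) \<and> agree (V \<union> MBV (ODE eqs Q)) s' t'"
      by blast
  qed
next
  case (Seq a b)
  show ?case
  proof (intro allI impI)
    fix V s t s' assume sub: "FV (Seq a b) \<subseteq> V" and ag: "agree V s t"
      and tr: "(s, s') \<in> psem (Seq a b)"
    then obtain w where w: "(s, w) \<in> psem a" "(w, s') \<in> psem b" by auto
    have "FV a \<subseteq> V" using sub by simp
    then obtain w' where w': "(t, w') \<in> psem a" "agree (V \<union> MBV a) w w'"
      using Seq.IH(1) ag w(1) by blast
    have "FV b \<subseteq> V \<union> MBV a" using sub by auto
    then obtain t' where "(w', t') \<in> psem b" "agree (V \<union> MBV a \<union> MBV b) s' t'"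
      using Seq.IH(2) w'(2) w(2) by blast
    then show "\<exists>t'. (t, t') \<in> psem (Seq a b) \<and> agree (V \<union> MBV (Seq a b)) s' t'"
      using w'(1) by (auto simp: agree_def)
  qed
next
  case (Choice a b)
  show ?case
  proof (intro allI impI)
    fix V s t s' assume sub: "FV (Choice a b) \<subseteq> V" and ag: "agree V s t"
      and tr: "(s, s') \<in> psem (Choice a b)"
    then consider "(s, s') \<in> psem a" | "(s, s') \<in> psem b" by auto
    then show "\<exists>t'. (t, t') \<in> psem (Choice a b) \<and> agree (V \<union> MBV (Choice a b)) s' t'"
    proof cases
      case 1
      moreover have "FV a \<subseteq> V" using sub by simp
      ultimately obtain t' where "(t, t') \<in> psem a" "agree (V \<union> MBV a) s' t'"
        using Choice.IH(1) ag by blast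
      then show ?thesis by (auto simp: agree_def)
    next
      case 2
      moreover have "FV b \<subseteq> V" using sub by simp
      ultimately obtain t' where "(t, t') \<in> psem b" "agree (V \<union> MBV b) s' t'"
        using Choice.IH(2) ag by blast
      then show ?thesis by (auto simp: agree_def)
    qed
  qed
next
  case (Loop a)
  show ?case
  proof (intro allI impI)
    fix V s t s' assume sub: "FV (Loop a) \<subseteq> V" and ag: "agree V s t"
      and tr: "(s, s') \<in> psem (Loop a)"
    have sa: "FV a \<subseteq> V" using sub by simp
    have "(s, s') \<in> (psem a)\<^sup>*" using tr by simp
    then have "\<exists>t'. (t, t') \<in> (psem a)\<^sup>* \<and> agree V s' t'"
    proof (induction rule: rtrancl_induct)
      case base then show ?case using ag by blast
    next
      case (step y z)
      then obtain t' where "(t, t') \<in> (psem a)\<^sup>*" "agree V y t'" by blast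
      then obtain t'' where "(t', t'') \<in> psem a" "agree (V \<union> MBV a) z t''"
        using Loop.IH sa step(2) by blast
      then show ?case using \<open>(t, t') \<in> (psem a)\<^sup>*\<close>
        by (meson agree_mono rtrancl.rtrancl_into_rtrancl sup_ge1)
    qed
    then show "\<exists>t'. (t, t') \<in> psem (Loop a) \<and> agree (V \<union> MBV (Loop a)) s' t'" by simp
  qed
qed

lemma lockstep:
  assumes fv: "FV B \<subseteq> H" and sim: "sim_H H A B"
  shows "lockstep_sim_H H A B"
  unfolding lockstep_sim_H_def
proof (intro allI impI)
  fix n :: nat and \<sigma> :: "nat \<Rightarrow> 'a state"
  assume run: "\<forall>i<n. (\<sigma> i, \<sigma> (Suc i)) \<in> psem A"
  have "\<forall>i. \<exists>p. i < n \<longrightarrow> (fst p, snd p) \<in> psem B \<and> agree H (\<sigma> i) (fst p) \<and> agree H (\<sigma> (Suc i)) (snd p)"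
    using run sim unfolding sim_H_def by fastforce
  then obtain f where f: "\<And>i. i < n \<Longrightarrow> (fst (f i), snd (f i)) \<in> psem B \<and>
      agree H (\<sigma> i) (fst (f i)) \<and> agree H (\<sigma> (Suc i)) (snd (f i))" by metis
  define g where "g i t = (SOME t'. (t, t') \<in> psem B \<and> agree H (snd (f i)) t')" for i t
  have g: "(t, g i t) \<in> psem B \<and> agree H (snd (f i)) (g i t)"
    if "i < n" "agree H (\<sigma> i) t" for i t
  proof -
    have "agree H (fst (f i)) t" using f[OF that(1)] that(2) agree_sym agree_trans by blast
    then have "\<exists>t'. (t, t') \<in> psem B \<and> agree (H \<union> MBV B) (snd (f i)) t'"
      using coinc(2) fv f[OF that(1)] by blast
    then have "\<exists>t'. (t, t') \<in> psem B \<and> agree H (snd (f i)) t'"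
      using agree_mono by blast
    then show ?thesis unfolding g_def by (rule someI_ex)
  qed
  define \<sigma>' where "\<sigma>' = rec_nat (\<sigma> 0) (\<lambda>i s. g i s)"
  have s0: "\<sigma>' 0 = \<sigma> 0" and sS: "\<And>i. \<sigma>' (Suc i) = g i (\<sigma>' i)" by (simp_all add: \<sigma>'_def)
  have agk: "k \<le> n \<Longrightarrow> agree H (\<sigma> k) (\<sigma>' k)" for k
  proof (induction k)
    case 0 then show ?case by (simp add: s0 agree_def)
  next
    case (Suc k)
    then have "k < n" "agree H (\<sigma> k) (\<sigma>' k)" by auto
    then show ?case using g f sS agree_trans by metis
  qed
  have "\<forall>j<n. (\<sigma>' j, \<sigma>' (Suc j)) \<in> psem B"
    using g agk sS by auto
  then show "\<exists>\<sigma>'. (\<forall>j<n. (\<sigma>' j, \<sigma>' (Suc j)) \<in> psem B) \<and> (\<forall>k\<le>n. agree H (\<sigma> k) (\<sigma>' k))"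
    using agk by blast
qed

theorem theorem2:
  fixes A B :: "'v hp" and H :: "'v set"
  assumes "loop_free A" and "loop_free B"
    and "FV A \<union> FV B \<subseteq> H"
    and "equiv_H H A B"
  shows "loop_equiv_H H A B"
  using assms lockstep unfolding loop_equiv_H_def equiv_H_def by auto

end
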